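(* Let $G$ be a finite group and let $\vec{\mathcal{C}}$ be a directed cycle of $\vec{\mathcal{P}}(G)$. Then $\vec{\mathcal{C}}$ is a maximal directed cycle if and only if its vertex set equals $[x]_{\diamond}$ for some $x\in G$ with $|[x]_{\diamond}|\geq3$.
   Context: The directed power graph $\vec{\mathcal{P}}(G)$ has vertex set $G$ and an arc $(x,y)$ iff $x\neq y$ and $y=x^m$ for some positive integer $m$. $x\diamond y$ iff $\langle x\rangle=\langle y\rangle$; $[x]_\diamond$ is the class of $x$. A directed cycle is a sequence $x_1,\dots,x_k,x_1$ of $k\ge3$ distinct vertices with arcs $(x_i,x_{i+1})$ for $i<k$ and $(x_k,x_1)$ (a subdigraph). A directed cycle is maximal if there is no directed cycle of the digraph whose vertex set properly contains its vertex set. *)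

theory Defs
  imports "HOL-Algebra.Algebra"
begin

definition ppg_arc :: "('a, 'b) monoid_scheme \<Rightarrow> 'a \<Rightarrow> 'a \<Rightarrow> bool" where
  "ppg_arc G x y \<longleftrightarrow> x \<in> carrier G \<and> y \<in> carrier G \<and> x \<noteq> y \<and>
     (\<exists>m::nat. m > 0 \<and> y = x [^]\<^bsub>G\<^esub> m)"

(* a directed cycle x_1,...,x_k,x_1 given as the list [x_1,...,x_k] *)
definition ppg_dcycle :: "('a, 'b) monoid_scheme \<Rightarrow> 'a list \<Rightarrow> bool" where
  "ppg_dcycle G xs \<longleftrightarrow> length xs \<ge> 3 \<and> distinct xs \<and> set xs \<subseteq> carrier G \<and>
     (\<forall>i. Suc i < length xs \<longrightarrow> ppg_arc G (xs ! i) (xs ! Suc i)) \<and>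
     ppg_arc G (last xs) (hd xs)"

definition ppg_max_dcycle :: "('a, 'b) monoid_scheme \<Rightarrow> 'a list \<Rightarrow> bool" where
  "ppg_max_dcycle G xs \<longleftrightarrow> ppg_dcycle G xs \<and>
     \<not> (\<exists>ys. ppg_dcycle G ys \<and> set xs \<subset> set ys)"

definition diamond_class :: "('a, 'b) monoid_scheme \<Rightarrow> 'a \<Rightarrow> 'a set" where
  "diamond_class G x = {y \<in> carrier G. generate G {y} = generate G {x}}"

end

theory Submission
  imports Defs
begin

context group
begin

lemma arc_gen_sub:
  assumes "ppg_arc G x y"
  shows "generate G {y} \<subseteq> generate G {x}"
proof -
  from assms obtain m :: nat where x: "x \<in> carrier G" and y: "y = x [^] m"
    unfolding ppg_arc_def by blast
  have "y = x [^] (int m)" using y by (simp add: int_pow_int)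
  then have "y \<in> generate G {x}" using generate_pow[OF x] by blast
  then show ?thesis
    using generate_subgroup_incl generate_is_subgroup x by blast
qed

lemma gen_pos_pow:
  assumes fin: "finite (carrier G)" and y: "y \<in> carrier G" and z: "z \<in> generate G {y}"
  shows "\<exists>m::nat. m > 0 \<and> z = y [^] m"
proof -
  obtain k :: nat where k: "z = y [^] k"
    using generate_pow_on_finite_carrier[OF fin y] z by blast
  have "y [^] (k + order G) = y [^] k"
    using pow_order_eq_1[OF y] y by (simp add: nat_pow_mult[symmetric])
  moreover have "order G > 0" using fin by (simp add: order_gt_0_iff_finite)
  ultimately show ?thesis using k by (intro exI[of _ "k + order G"]) auto
qed

lemma cycle_chain:
  assumes c: "ppg_dcycle G xs"
  shows "i \<le> j \<Longrightarrow> j < length xs \<Longrightarrow> generate G {xs ! j} \<subseteq> generate G {xs ! i}"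
proof (induction j)
  case 0 then show ?case by simp
next
  case (Suc j)
  show ?case
  proof (cases "i = Suc j")
    case True then show ?thesis by simp
  next
    case False
    then have "generate G {xs ! j} \<subseteq> generate G {xs ! i}" using Suc by simp
    moreover have "ppg_arc G (xs ! j) (xs ! Suc j)" using c Suc.prems unfolding ppg_dcycle_def by blast
    ultimately show ?thesis using arc_gen_sub by blast
  qed
qed

lemma cycle_gen_eq:
  assumes c: "ppg_dcycle G xs" and z: "z \<in> set xs"
  shows "generate G {z} = generate G {hd xs}"
proof -
  have len: "length xs \<ge> 3" using c unfolding ppg_dcycle_def by blast
  obtain i where i: "i < length xs" "z = xs ! i" using z by (metis in_set_conv_nth)
  have hd: "hd xs = xs ! 0" using len by (intro hd_conv_nth) auto
  have last: "last xs = xs ! (length xs - 1)" using len by (intro last_conv_nth) auto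
  have 1: "generate G {z} \<subseteq> generate G {hd xs}"
    using cycle_chain[OF c, of 0 i] i hd by simp
  have 2: "generate G {last xs} \<subseteq> generate G {z}"
    using cycle_chain[OF c, of i "length xs - 1"] i last by simp
  have 3: "generate G {hd xs} \<subseteq> generate G {last xs}"
    using c arc_gen_sub unfolding ppg_dcycle_def by blast
  show ?thesis using 1 2 3 by blast
qed

lemma cycle_sub_class:
  assumes c: "ppg_dcycle G xs"
  shows "set xs \<subseteq> diamond_class G (hd xs)"
  using cycle_gen_eq[OF c] c unfolding diamond_class_def ppg_dcycle_def by blast

lemma class_cycle:
  assumes fin: "finite (carrier G)" and d: "distinct ys" and s: "set ys = diamond_class G x"
    and card: "card (diamond_class G x) \<ge> 3"
  shows "ppg_dcycle G ys"
proof -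
  have sub: "set ys \<subseteq> carrier G" using s unfolding diamond_class_def by blast
  have arc: "ppg_arc G y z" if "y \<in> set ys" "z \<in> set ys" "y \<noteq> z" for y z
  proof -
    have "generate G {z} = generate G {y}" using that s unfolding diamond_class_def by auto
    moreover have "z \<in> generate G {z}" using that sub by (simp add: generate.incl)
    ultimately have "z \<in> generate G {y}" by simp
    then show ?thesis using gen_pos_pow[OF fin, of y z] that sub unfolding ppg_arc_def by blast
  qed
  have len: "length ys \<ge> 3" using card s d distinct_card by metis
  have "\<forall>i. Suc i < length ys \<longrightarrow> ppg_arc G (ys ! i) (ys ! Suc i)"
  proof (intro allI impI)
    fix i assume "Suc i < length ys"
    then show "ppg_arc G (ys ! i) (ys ! Suc i)"
      using arc d by (simp add: nth_eq_iff_index_eq)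
  qed
  moreover have "ppg_arc G (last ys) (hd ys)"
  proof -
    have "last ys = ys ! (length ys - 1)" "hd ys = ys ! 0" using len
      by (auto simp del: One_nat_def intro!: last_conv_nth hd_conv_nth)
    moreover have "ys ! (length ys - 1) \<noteq> ys ! 0" using len d by (subst nth_eq_iff_index_eq) auto
    ultimately show ?thesis using arc len by (metis hd_in_set last_in_set list.size(3) not_numeral_le_zero)
  qed
  ultimately show ?thesis using len d sub unfolding ppg_dcycle_def by blast
qed

end

theorem mainTheorem3:
  fixes G (structure) and xs :: "'a list"
  assumes "group G" and "finite (carrier G)" and "ppg_dcycle G xs"
  shows "ppg_max_dcycle G xs \<longleftrightarrow>
    (\<exists>x \<in> carrier G. set xs = diamond_class G x \<and> card (diamond_class G x) \<ge> 3)"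
proof
  interpret group G by fact
  assume m: "ppg_max_dcycle G xs"
  let ?D = "diamond_class G (hd xs)"
  have len: "length xs \<ge> 3" and dx: "distinct xs" using assms(3) unfolding ppg_dcycle_def by auto
  have hc: "hd xs \<in> carrier G" using assms(3) len unfolding ppg_dcycle_def
    by (metis hd_in_set list.size(3) not_numeral_le_zero subset_iff)
  have sub: "set xs \<subseteq> ?D" by (rule cycle_sub_class[OF assms(3)])
  have finD: "finite ?D" using assms(2) unfolding diamond_class_def by simp
  have cardD: "card ?D \<ge> 3" using card_mono[OF finD sub] len distinct_card[OF dx] by simp
  obtain ys where ys: "set ys = ?D" "distinct ys" using finite_distinct_list[OF finD] by blast
  have "ppg_dcycle G ys" using class_cycle[OF assms(2) ys(2) ys(1) cardD] .
  then have "set xs = ?D" using m sub ys(1) unfolding ppg_max_dcycle_def by blast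
  then show "\<exists>x \<in> carrier G. set xs = diamond_class G x \<and> card (diamond_class G x) \<ge> 3"
    using hc cardD by blast
next
  interpret group G by fact
  assume "\<exists>x \<in> carrier G. set xs = diamond_class G x \<and> card (diamond_class G x) \<ge> 3"
  then obtain x where x: "x \<in> carrier G" "set xs = diamond_class G x" by blast
  show "ppg_max_dcycle G xs" unfolding ppg_max_dcycle_def
  proof (intro conjI notI)
    show "ppg_dcycle G xs" by fact
    assume "\<exists>ys. ppg_dcycle G ys \<and> set xs \<subset> set ys"
    then obtain ys where ys: "ppg_dcycle G ys" "set xs \<subset> set ys" by blast
    have xin: "x \<in> set xs" using x unfolding diamond_class_def by simp
    then have "x \<in> set ys" using ys by blast
    then have gx: "generate G {x} = generate G {hd ys}" using cycle_gen_eq[OF ys(1)] by simp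
    have "set ys \<subseteq> diamond_class G x"
      using cycle_sub_class[OF ys(1)] gx unfolding diamond_class_def by auto
    then show False using ys(2) x(2) by blast
  qed
qed

end
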